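(* Let $k$ be a field and let $h_\bullet=(h_0,h_1,h_2,\ldots)$ be a sequence of nonnegative integers with $h_0=1$ that is unimodal at each tail. Let $n=h_1$ if $h_1\ge1$ and $n=1$ if $h_1=0$. Then there is an almost reverse lexicographic ideal $I$ in $R=k[x_1,\ldots,x_n]$ such that $H(R/I,d)=h_d$ for all $d\ge0$.
   Context: $H(R/I,d)=\dim_k(R/I)_d$. Degree reverse lexicographic order: for $M=x^\alpha,N=x^\beta$, $M>N$ iff $\deg M>\deg N$, or degrees are equal and for the largest $s$ with $\alpha_s\neq\beta_s$ one has $\alpha_s<\beta_s$. A monomial ideal $I$ is almost reverse lexicographic if for every monomial $M$ and every minimal monomial generator $N$ of $I$ with $\deg M=\deg N$ and $M>N$, $M\in I$ (the zero ideal counts). For a sequence $h_\bullet$ of nonnegative integers with $h_0=1$: $h^{(0)}_\bullet=h_\bullet$ and, for $1\le i<h_1$, $h^{(i)}_0=1$, $h^{(i)}_d=\max\{0,h^{(i-1)}_d-h^{(i-1)}_{d-1}\}$ for $d\ge1$. For $0\le i<\max\{1,h_1\}$, $r_i=\min\{d\ge1:h^{(i)}_d\le h^{(i)}_{d-1}\}$ ($\infty$ if none), and $D(h_\bullet)=\min\{i:r_i<\infty\}$. The sequence is unimodal at each tail if for every $i$ with $D(h_\bullet)\le i<\max\{1,h_1\}$, $h^{(i)}_d\le h^{(i)}_{d-1}$ for all $d\ge r_i$. *)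

theory Defs
  imports Main "HOL-Library.Extended_Nat"
begin

text \<open>Monomials of k[x_1,...,x_n] are exponent vectors a :: nat => nat with a i = 0 for i >= n
  (variable x_(i+1) has exponent a i).  A monomial ideal is identified with the set of monomials it
  contains (an upward closed set w.r.t. divisibility); it is spanned over k by these monomials, so
  the quotient R/I has as k-basis the monomials not in I.\<close>

definition mons :: "nat \<Rightarrow> (nat \<Rightarrow> nat) set" where
  "mons n = {a. \<forall>i\<ge>n. a i = 0}"

definition mdeg :: "nat \<Rightarrow> (nat \<Rightarrow> nat) \<Rightarrow> nat" where
  "mdeg n a = (\<Sum>i<n. a i)"

definition mdvd :: "(nat \<Rightarrow> nat) \<Rightarrow> (nat \<Rightarrow> nat) \<Rightarrow> bool" where
  "mdvd a b \<longleftrightarrow> (\<forall>i. a i \<le> b i)"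

definition monomial_ideal :: "nat \<Rightarrow> (nat \<Rightarrow> nat) set \<Rightarrow> bool" where
  "monomial_ideal n I \<longleftrightarrow> I \<subseteq> mons n \<and> (\<forall>a\<in>I. \<forall>b\<in>mons n. mdvd a b \<longrightarrow> b \<in> I)"

definition min_gens :: "(nat \<Rightarrow> nat) set \<Rightarrow> (nat \<Rightarrow> nat) set" where
  "min_gens I = {a \<in> I. \<forall>b\<in>I. mdvd b a \<longrightarrow> b = a}"

definition revlex_gt :: "nat \<Rightarrow> (nat \<Rightarrow> nat) \<Rightarrow> (nat \<Rightarrow> nat) \<Rightarrow> bool" where
  "revlex_gt n a b \<longleftrightarrow> mdeg n a > mdeg n b \<or>
     (mdeg n a = mdeg n b \<and>
      (\<exists>s<n. a s \<noteq> b s \<and> (\<forall>t. s < t \<and> t < n \<longrightarrow> a t = b t) \<and> a s < b s))"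

definition almost_revlex :: "nat \<Rightarrow> (nat \<Rightarrow> nat) set \<Rightarrow> bool" where
  "almost_revlex n I \<longleftrightarrow> monomial_ideal n I \<and>
     (\<forall>M\<in>mons n. \<forall>N\<in>min_gens I. mdeg n M = mdeg n N \<and> revlex_gt n M N \<longrightarrow> M \<in> I)"

text \<open>H(R/I,d) = dim_k (R/I)_d = number of degree-d monomials not in I.\<close>
definition hilb :: "nat \<Rightarrow> (nat \<Rightarrow> nat) set \<Rightarrow> nat \<Rightarrow> nat" where
  "hilb n I d = card {a \<in> mons n. mdeg n a = d \<and> a \<notin> I}"

text \<open>The derived sequences h^(i) (nat subtraction truncates, giving max 0).\<close>
fun hseq :: "(nat \<Rightarrow> nat) \<Rightarrow> nat \<Rightarrow> nat \<Rightarrow> nat" where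
  "hseq h 0 d = h d"
| "hseq h (Suc i) d = (if d = 0 then 1 else hseq h i d - hseq h i (d - 1))"

definition rr :: "(nat \<Rightarrow> nat) \<Rightarrow> nat \<Rightarrow> enat" where
  "rr h i = (if \<exists>d\<ge>1. hseq h i d \<le> hseq h i (d - 1)
             then enat (LEAST d. d \<ge> 1 \<and> hseq h i d \<le> hseq h i (d - 1)) else \<infinity>)"

definition DD :: "(nat \<Rightarrow> nat) \<Rightarrow> nat" where
  "DD h = (LEAST i. i < max 1 (h 1) \<and> rr h i < \<infinity>)"

definition unimodal_at_tails :: "(nat \<Rightarrow> nat) \<Rightarrow> bool" where
  "unimodal_at_tails h \<longleftrightarrow>
     (\<forall>i. DD h \<le> i \<and> i < max 1 (h 1) \<longrightarrow>
        (\<forall>d. enat d \<ge> rr h i \<longrightarrow> hseq h i d \<le> hseq h i (d - 1)))"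

end

theory Submission
  imports Defs
begin


lemma mdeg_Suc: "mdeg (Suc n) a = mdeg n a + a n"
  by (simp add: mdeg_def)

lemma mdeg_upd_ge: "n \<le> i \<Longrightarrow> mdeg n (a(i:=x)) = mdeg n a"
  unfolding mdeg_def by (rule sum.cong) auto

lemma mdeg_upd_lt: assumes "i < n" shows "mdeg n (a(i:=x)) + a i = mdeg n a + x"
proof -
  have 1: "mdeg n a = a i + (\<Sum>j\<in>{..<n}-{i}. a j)"
    using sum.remove[of "{..<n}" i a] assms by (simp add: mdeg_def)
  have 2: "mdeg n (a(i:=x)) = x + (\<Sum>j\<in>{..<n}-{i}. (a(i:=x)) j)"
    using sum.remove[of "{..<n}" i "a(i:=x)"] assms by (simp add: mdeg_def)
  have 3: "(\<Sum>j\<in>{..<n}-{i}. (a(i:=x)) j) = (\<Sum>j\<in>{..<n}-{i}. a j)"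
    by (rule sum.cong) auto
  show ?thesis using 1 2 3 by simp
qed

lemma mons_upd: "a \<in> mons n \<Longrightarrow> i < n \<Longrightarrow> a(i:=x) \<in> mons n"
  by (auto simp: mons_def)

lemma mons_Suc: "a \<in> mons m \<Longrightarrow> a \<in> mons (Suc m)"
  by (auto simp: mons_def)

lemma mons_down: assumes "a \<in> mons (Suc m)" "a m = 0" shows "a \<in> mons m"
  unfolding mons_def
proof (intro CollectI allI impI)
  fix i assume "m \<le> i"
  show "a i = 0"
  proof (cases "i = m")
    case True then show ?thesis using assms(2) by simp
  next
    case False then have "Suc m \<le> i" using \<open>m \<le> i\<close> by simp
    then show ?thesis using assms(1) by (simp add: mons_def)
  qed
qed

lemma mdeg_mons_Suc: "a \<in> mons m \<Longrightarrow> mdeg (Suc m) a = mdeg m a"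
  by (simp add: mdeg_Suc mons_def)

lemma mons_cut: "a \<in> mons (Suc n) \<Longrightarrow> a(n:=0) \<in> mons n"
  by (rule mons_down) (simp_all add: mons_upd)

lemma finite_mons_le: "finite {a \<in> mons n. mdeg n a \<le> d}"
proof (induction n)
  case 0
  have "{a \<in> mons 0. mdeg 0 a \<le> d} \<subseteq> {\<lambda>_. 0}" by (auto simp: mons_def)
  then show ?case using finite_subset by blast
next
  case (Suc n)
  have "{a \<in> mons (Suc n). mdeg (Suc n) a \<le> d} \<subseteq>
      (\<lambda>p. (fst p)(n:=snd p)) ` ({a \<in> mons n. mdeg n a \<le> d} \<times> {..d})"
  proof
    fix a assume a: "a \<in> {a \<in> mons (Suc n). mdeg (Suc n) a \<le> d}"
    have 1: "a(n:=0) \<in> mons n" using a mons_cut by blast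
    have 2: "mdeg n (a(n:=0)) \<le> d" using a by (simp add: mdeg_upd_ge mdeg_Suc)
    have 3: "a n \<le> d" using a by (simp add: mdeg_Suc)
    have 4: "a = (\<lambda>p. (fst p)(n:=snd p)) (a(n:=0), a n)" by simp
    have 5: "(a(n:=0), a n) \<in> {a \<in> mons n. mdeg n a \<le> d} \<times> {..d}" using 1 2 3 by simp
    show "a \<in> (\<lambda>p. (fst p)(n:=snd p)) ` ({a \<in> mons n. mdeg n a \<le> d} \<times> {..d})"
      using 4 5 by (rule image_eqI)
  qed
  then show ?case
    by (rule finite_subset) (intro finite_imageI finite_cartesian_product Suc.IH finite_atMost)
qed

lemma finite_mons_eq: "finite {a \<in> mons n. mdeg n a = d}"
  by (rule finite_subset[OF _ finite_mons_le[of n d]]) auto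

lemma rl_irrefl: "\<not> revlex_gt n a a"
  by (auto simp: revlex_gt_def)

lemma rl_trans: assumes "revlex_gt n a b" "revlex_gt n b c" shows "revlex_gt n a c"
proof -
  have d1: "mdeg n a > mdeg n b \<or> mdeg n a = mdeg n b" using assms(1) unfolding revlex_gt_def by blast
  have d2: "mdeg n b > mdeg n c \<or> mdeg n b = mdeg n c" using assms(2) unfolding revlex_gt_def by blast
  consider "mdeg n a > mdeg n b" | "mdeg n b > mdeg n c" |
    "mdeg n a = mdeg n b" "mdeg n b = mdeg n c" using d1 d2 by blast
  then show ?thesis
  proof cases
    case 1 then show ?thesis using assms(2) by (auto simp: revlex_gt_def)
  next
    case 2 then show ?thesis using assms(1) by (auto simp: revlex_gt_def)
  next
    case 3
    obtain s1 where s1: "s1 < n" "a s1 < b s1" "\<forall>t. s1 < t \<and> t < n \<longrightarrow> a t = b t"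
      using assms(1) 3 by (auto simp: revlex_gt_def)
    obtain s2 where s2: "s2 < n" "b s2 < c s2" "\<forall>t. s2 < t \<and> t < n \<longrightarrow> b t = c t"
      using assms(2) 3 by (auto simp: revlex_gt_def)
    have "\<exists>s<n. a s \<noteq> c s \<and> (\<forall>t. s < t \<and> t < n \<longrightarrow> a t = c t) \<and> a s < c s"
    proof (cases s1 s2 rule: linorder_cases)
      case less then show ?thesis using s1 s2 by (intro exI[of _ s2]) auto
    next
      case equal then show ?thesis using s1 s2 by (intro exI[of _ s2]) auto
    next
      case greater then show ?thesis using s1 s2 by (intro exI[of _ s1]) auto
    qed
    then show ?thesis using 3 by (auto simp: revlex_gt_def)
  qed
qed

lemma rl_total:
  assumes "a \<in> mons n" "b \<in> mons n" "mdeg n a = mdeg n b" "a \<noteq> b"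
  shows "revlex_gt n a b \<or> revlex_gt n b a"
proof -
  obtain i where i: "a i \<noteq> b i" using assms(4) by auto
  have "i < n"
  proof (rule ccontr)
    assume "\<not> i < n"
    then show False using i assms(1,2) by (auto simp: mons_def)
  qed
  define S where "S = {i. i < n \<and> a i \<noteq> b i}"
  have fS: "finite S" "S \<noteq> {}" using i \<open>i<n\<close> by (auto simp: S_def)
  define s where "s = Max S"
  have sS: "s \<in> S" using fS Max_in s_def by blast
  have sn: "s < n" using sS by (simp add: S_def)
  have above: "\<forall>t. s < t \<and> t < n \<longrightarrow> a t = b t"
  proof (intro allI impI)
    fix t assume t: "s < t \<and> t < n"
    show "a t = b t"
    proof (rule ccontr)
      assume "a t \<noteq> b t"
      then have "t \<in> S" using t by (simp add: S_def)
      then have "t \<le> s" using fS(1) by (simp add: s_def)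
      then show False using t by simp
    qed
  qed
  have ne: "a s \<noteq> b s" using sS by (simp add: S_def)
  show ?thesis
  proof (cases "a s < b s")
    case True
    have "revlex_gt n a b" unfolding revlex_gt_def
      apply (rule disjI2, rule conjI, rule assms(3), rule exI[of _ s])
      using sn True ne above by simp
    then show ?thesis ..
  next
    case False
    then have lt: "b s < a s" using ne by simp
    have "revlex_gt n b a" unfolding revlex_gt_def
      apply (rule disjI2, rule conjI, rule sym, rule assms(3), rule exI[of _ s])
      using sn lt ne above by simp
    then show ?thesis ..
  qed
qed

definition botk :: "nat \<Rightarrow> nat \<Rightarrow> (nat \<Rightarrow> nat) set \<Rightarrow> (nat \<Rightarrow> nat) set" where
  "botk n k S = {x \<in> S. card {y \<in> S. revlex_gt n x y} < k}"

lemma bot_sub: "botk n k S \<subseteq> S" by (auto simp: botk_def)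

lemma bot_down: assumes "finite S" "x \<in> botk n k S" "y \<in> S" "revlex_gt n x y"
  shows "y \<in> botk n k S"
proof -
  have "{w \<in> S. revlex_gt n y w} \<subseteq> {w \<in> S. revlex_gt n x w}"
    using rl_trans assms(4) by blast
  then have "card {w \<in> S. revlex_gt n y w} \<le> card {w \<in> S. revlex_gt n x w}"
    using assms(1) by (simp add: card_mono)
  then show ?thesis using assms by (auto simp: botk_def)
qed

lemma bot_card:
  assumes "finite S" "S \<subseteq> {a \<in> mons n. mdeg n a = d}"
  shows "card (botk n k S) = min k (card S)"
proof -
  define \<phi> where "\<phi> x = card {y \<in> S. revlex_gt n x y}" for x
  have lt: "\<phi> x < \<phi> y" if "x \<in> S" "y \<in> S" "revlex_gt n y x" for x y
  proof -
    have "{w \<in> S. revlex_gt n x w} \<subset> {w \<in> S. revlex_gt n y w}"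
      using rl_trans that rl_irrefl by blast
    then show ?thesis unfolding \<phi>_def using assms(1) by (simp add: psubset_card_mono)
  qed
  have inj: "inj_on \<phi> S"
  proof (rule inj_onI)
    fix x y assume "x \<in> S" "y \<in> S" "\<phi> x = \<phi> y"
    show "x = y"
    proof (rule ccontr)
      assume "x \<noteq> y"
      moreover have xx: "x \<in> {a \<in> mons n. mdeg n a = d}" "y \<in> {a \<in> mons n. mdeg n a = d}"
        using assms(2) \<open>x\<in>S\<close> \<open>y\<in>S\<close> by blast+
      ultimately have "revlex_gt n x y \<or> revlex_gt n y x" using rl_total[of x n y] by simp
      then show False using lt \<open>x\<in>S\<close> \<open>y\<in>S\<close> \<open>\<phi> x = \<phi> y\<close> by fastforce
    qed
  qed
  have rng: "\<phi> ` S \<subseteq> {..<card S}"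
  proof
    fix z assume "z \<in> \<phi> ` S"
    then obtain x where x: "x \<in> S" "z = \<phi> x" by auto
    have "{w \<in> S. revlex_gt n x w} \<subset> S" using x rl_irrefl by blast
    then show "z \<in> {..<card S}" using x assms(1) by (simp add: \<phi>_def psubset_card_mono)
  qed
  have eq: "\<phi> ` S = {..<card S}"
    by (rule card_subset_eq[OF finite_lessThan rng]) (simp add: card_image[OF inj])
  have "botk n k S = {x \<in> S. \<phi> x < k}" by (simp add: botk_def \<phi>_def)
  moreover have "card (\<phi> ` {x \<in> S. \<phi> x < k}) = card {x \<in> S. \<phi> x < k}"
    by (rule card_image, rule inj_on_subset[OF inj]) blast
  ultimately have "card (botk n k S) = card (\<phi> ` {x \<in> S. \<phi> x < k})" by simp
  also have "\<phi> ` {x \<in> S. \<phi> x < k} = {..<card S} \<inter> {..<k}" using eq by auto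
  also have "card ({..<card S} \<inter> {..<k}) = min k (card S)"
  proof -
    have "{..<card S} \<inter> {..<k} = {..<min k (card S)}" by (auto simp: min_def)
    then show ?thesis by simp
  qed
  finally show ?thesis .
qed

lemma le_mdeg: "i < n \<Longrightarrow> a i \<le> mdeg n a"
  unfolding mdeg_def by (rule member_le_sum) simp_all

lemma mdeg0: assumes "a \<in> mons n" "mdeg n a = 0" shows "a i = 0"
proof (cases "i < n")
  case True then show ?thesis using le_mdeg[of i n a] assms(2) by simp
next
  case False then show ?thesis using assms(1) by (simp add: mons_def)
qed



lemma rl_zero:
  assumes "revlex_gt (Suc m) M N" "mdeg (Suc m) M = mdeg (Suc m) N" "N m = 0"
  shows "M m = 0"
proof (rule ccontr)
  assume M: "M m \<noteq> 0"
  obtain s where s: "s < Suc m" "M s < N s" "\<forall>t. s < t \<and> t < Suc m \<longrightarrow> M t = N t"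
    using assms(1,2) by (auto simp: revlex_gt_def)
  show False
  proof (cases "s = m")
    case True then show ?thesis using s assms(3) by simp
  next
    case False
    then have "s < m" using s(1) by simp
    then have "M m = N m" using s(3) by simp
    then show False using M assms(3) by simp
  qed
qed

lemma rl_down:
  assumes "revlex_gt (Suc m) M N" "mdeg (Suc m) M = mdeg (Suc m) N" "N m = 0" "M m = 0"
  shows "revlex_gt m M N"
proof -
  obtain s where s: "s < Suc m" "M s < N s" "\<forall>t. s < t \<and> t < Suc m \<longrightarrow> M t = N t"
    using assms(1,2) by (auto simp: revlex_gt_def)
  have "s \<noteq> m" using s assms by auto
  then have "s < m" using s by auto
  moreover have "mdeg m M = mdeg m N" using assms(2-4) by (simp add: mdeg_Suc)
  ultimately show ?thesis using s unfolding revlex_gt_def by auto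
qed

lemma mons_zero: "a \<in> mons n \<Longrightarrow> n \<le> i \<Longrightarrow> a i = 0"
  by (simp add: mons_def)

locale stp =
  fixes m :: nat and J :: "(nat\<Rightarrow>nat) set" and g h :: "nat\<Rightarrow>nat" and r :: enat
  assumes J: "almost_revlex m J"
  and gJ: "\<And>d. hilb m J d = g d"
  and h0: "h 0 = g 0"
  and hinc: "\<And>d. enat (Suc d) < r \<Longrightarrow> h (Suc d) = h d + g (Suc d)"
  and hdec: "\<And>d. \<not> enat (Suc d) < r \<Longrightarrow> h (Suc d) \<le> h d"
begin

definition Z where "Z d = {a \<in> mons m. mdeg m a = d \<and> a \<notin> J}"
definition sh :: "(nat \<Rightarrow> nat) \<Rightarrow> (nat \<Rightarrow> nat)" where "sh a = a(m := Suc (a m))"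
definition sw :: "nat \<Rightarrow> (nat \<Rightarrow> nat) \<Rightarrow> (nat \<Rightarrow> nat)" where
  "sw i a = a(i := a i - 1, m := Suc (a m))"

primrec A :: "nat \<Rightarrow> (nat\<Rightarrow>nat) set" where
  "A 0 = Z 0"
| "A (Suc d) = (if enat (Suc d) < r then Z (Suc d) \<union> sh ` A d
               else botk (Suc m) (h (Suc d)) (sh ` A d))"

lemma mdeg_sh: "mdeg (Suc m) (sh a) = Suc (mdeg (Suc m) a)"
  by (simp add: sh_def mdeg_Suc mdeg_upd_ge)

lemma sh_mons: "a \<in> mons (Suc m) \<Longrightarrow> sh a \<in> mons (Suc m)"
  by (simp add: sh_def mons_upd)

lemma sh_inj: "inj sh"
proof (rule injI)
  fix a b assume e: "sh a = sh b"
  show "a = b"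
  proof
    fix j
    have "sh a j = sh b j" using e by simp
    then show "a j = b j" by (cases "j = m") (simp_all add: sh_def)
  qed
qed

lemma sh_m: "sh a m > 0" by (simp add: sh_def)

lemma Z_m: "a \<in> Z d \<Longrightarrow> a m = 0" unfolding Z_def using mons_zero[of a m m] by simp

lemma Z_sub: "Z d \<subseteq> {a \<in> mons (Suc m). mdeg (Suc m) a = d}"
  by (auto simp: Z_def mons_Suc mdeg_mons_Suc)

lemma finZ: "finite (Z d)"
  by (rule finite_subset[OF _ finite_mons_eq[of m d]]) (auto simp: Z_def)

lemma cardZ: "card (Z d) = g d"
  using gJ[of d] by (simp add: hilb_def Z_def)

lemma A_sub: "A d \<subseteq> {a \<in> mons (Suc m). mdeg (Suc m) a = d}"
proof (induction d)
  case 0 then show ?case using Z_sub by simp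
next
  case (Suc d)
  have "sh ` A d \<subseteq> {a \<in> mons (Suc m). mdeg (Suc m) a = Suc d}"
    using Suc by (auto simp: mdeg_sh sh_mons)
  show ?case
  proof (cases "enat (Suc d) < r")
    case True then show ?thesis using Z_sub[of "Suc d"] \<open>sh ` A d \<subseteq> _\<close> by simp
  next
    case False
    have "A (Suc d) \<subseteq> sh ` A d" using False bot_sub by simp
    then show ?thesis using \<open>sh ` A d \<subseteq> _\<close> by (rule subset_trans)
  qed
qed

lemma finA: "finite (A d)"
  by (rule finite_subset[OF A_sub finite_mons_eq])

lemma cardA: "card (A d) = h d"
proof (induction d)
  case 0 then show ?case using cardZ h0 by simp
next
  case (Suc d)
  have "card (sh ` A d) = card (A d)" by (rule card_image) (rule inj_on_subset[OF sh_inj], simp)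
  then have cs: "card (sh ` A d) = h d" using Suc.IH by simp
  have fS: "finite (sh ` A d)" using finA by simp
  show ?case
  proof (cases "enat (Suc d) < r")
    case True
    have "x \<notin> Z (Suc d)" if "x \<in> sh ` A d" for x using that Z_m[of x "Suc d"] by (auto simp: sh_def)
    then have "Z (Suc d) \<inter> sh ` A d = {}" by blast
    then have "card (Z (Suc d) \<union> sh ` A d) = card (Z (Suc d)) + card (sh ` A d)"
      by (rule card_Un_disjoint[OF finZ fS])
    then have "card (Z (Suc d) \<union> sh ` A d) = g (Suc d) + h d" using cs cardZ by simp
    then show ?thesis using True hinc by simp
  next
    case False
    have "sh ` A d \<subseteq> {a \<in> mons (Suc m). mdeg (Suc m) a = Suc d}"
      using A_sub[of d] by (auto simp: mdeg_sh sh_mons)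
    then have "card (botk (Suc m) (h (Suc d)) (sh ` A d)) = min (h (Suc d)) (card (sh ` A d))"
      by (rule bot_card[OF fS])
    then have "card (botk (Suc m) (h (Suc d)) (sh ` A d)) = min (h (Suc d)) (h d)" using cs by simp
    then show ?thesis using False hdec[of d] by simp
  qed
qed

lemma Zdown:
  assumes "u \<in> Z (Suc d)" "i < m" "u i > 0"
  shows "u(i := u i - 1) \<in> Z d"
proof -
  let ?v = "u(i := u i - 1)"
  have um: "u \<in> mons m" "mdeg m u = Suc d" "u \<notin> J" using assms by (auto simp: Z_def)
  have vm: "?v \<in> mons m" using um mons_upd assms by blast
  have "mdeg m ?v + u i = mdeg m u + (u i - 1)" using mdeg_upd_lt assms(2) by blast
  then have "mdeg m ?v = d" using um assms by simp
  moreover have "?v \<notin> J"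
  proof
    assume "?v \<in> J"
    moreover have "mdvd ?v u" by (simp add: mdvd_def)
    ultimately have "u \<in> J" using J um unfolding almost_revlex_def monomial_ideal_def by blast
    then show False using um by simp
  qed
  ultimately show ?thesis using vm by (simp add: Z_def)
qed

lemma low_of: "enat (Suc d) < r \<Longrightarrow> d = 0 \<or> enat d < r"
proof -
  assume "enat (Suc d) < r"
  then have "enat d < r" by (rule order.strict_trans[rotated]) simp
  then show ?thesis by simp
qed

lemma Z_subA: "d = 0 \<or> enat d < r \<Longrightarrow> Z d \<subseteq> A d"
  by (cases d) auto

lemma sw_sh: "i < m \<Longrightarrow> sw i (sh w) = sh (sw i w)"
  by (auto simp: sw_def sh_def fun_eq_iff)

lemma sw_Z: "i < m \<Longrightarrow> u m = 0 \<Longrightarrow> sw i u = sh (u(i := u i - 1))"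
  by (auto simp: sw_def sh_def fun_eq_iff)

lemma Q: "u \<in> A d \<Longrightarrow> i < m \<Longrightarrow> u i > 0 \<Longrightarrow> sw i u \<in> A d"
proof (induction d arbitrary: u)
  case 0
  have u0: "u \<in> A 0" using 0 by simp
  then have "u \<in> {a \<in> mons (Suc m). mdeg (Suc m) a = 0}" using A_sub[of 0] by blast
  then have "u i = 0" using mdeg0[where a=u and n="Suc m" and i=i] by simp
  then show ?case using 0 by simp
next
  case (Suc d)
  show ?case
  proof (cases "enat (Suc d) < r")
    case True
    then have AS: "A (Suc d) = Z (Suc d) \<union> sh ` A d" by simp
    have low: "d = 0 \<or> enat d < r" using True
      by (rule low_of)
    show ?thesis
    proof (cases "u \<in> Z (Suc d)")
      case True
      have "u(i := u i - 1) \<in> A d" using Zdown[OF True Suc.prems(2,3)] Z_subA[OF low] by blast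
      moreover have "sw i u = sh (u(i := u i - 1))" using sw_Z[of i u] Suc.prems(2) Z_m[OF True] by simp
      ultimately show ?thesis using AS by auto
    next
      case False
      then obtain w where w: "w \<in> A d" "u = sh w" using Suc.prems AS by auto
      have "w i > 0" using w Suc.prems by (simp add: sh_def)
      then have "sw i w \<in> A d" using Suc.IH w Suc.prems by blast
      then show ?thesis using AS w sw_sh Suc.prems by auto
    qed
  next
    case False
    then have AS: "A (Suc d) = botk (Suc m) (h (Suc d)) (sh ` A d)" by simp
    then obtain w where w: "w \<in> A d" "u = sh w" using Suc.prems bot_sub by blast
    have "w i > 0" using w Suc.prems by (simp add: sh_def)
    then have "sw i w \<in> A d" using Suc.IH w Suc.prems by blast
    then have inS: "sw i u \<in> sh ` A d" using w sw_sh Suc.prems by auto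
    have d1: "mdeg (Suc m) (sw i u) = Suc d" using inS A_sub[of d] by (auto simp: mdeg_sh)
    have d2: "mdeg (Suc m) u = Suc d" using Suc.prems(1) A_sub[of "Suc d"] by blast
    have dd: "mdeg (Suc m) u = mdeg (Suc m) (sw i u)" using d1 d2 by simp
    have rl: "revlex_gt (Suc m) u (sw i u)"
      unfolding revlex_gt_def
      apply (rule disjI2, rule conjI, rule dd, rule exI[of _ m])
      using Suc.prems(2) by (simp add: sw_def)
    have fS: "finite (sh ` A d)" using finA by simp
    have ub: "u \<in> botk (Suc m) (h (Suc d)) (sh ` A d)" using Suc.prems(1) AS by simp
    have "sw i u \<in> botk (Suc m) (h (Suc d)) (sh ` A d)" using bot_down[OF fS ub inS rl] .
    then show ?thesis using AS by simp
  qed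
qed

lemma step:
  assumes "b \<in> A (Suc d)" "i < Suc m" "b i > 0"
  shows "b(i := b i - 1) \<in> A d"
proof -
  have sh_case: "b(i := b i - 1) \<in> A d" if w: "w \<in> A d" "b = sh w" for w
  proof (cases "i = m")
    case True then show ?thesis using w by (simp add: sh_def)
  next
    case False
    then have im: "i < m" using assms by simp
    have "w i > 0" using w assms False by (simp add: sh_def)
    then have "sw i w \<in> A d" using Q w im by blast
    moreover have "b(i := b i - 1) = sw i w" using w False by (auto simp: sw_def sh_def fun_eq_iff)
    ultimately show ?thesis by simp
  qed
  show ?thesis
  proof (cases "b \<in> sh ` A d")
    case True then show ?thesis using sh_case by blast
  next
    case False
    then have T: "enat (Suc d) < r" and bZ: "b \<in> Z (Suc d)" using assms(1) bot_sub
      by (auto split: if_splits)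
    have low: "d = 0 \<or> enat d < r" using T
      by (rule low_of)
    have "i \<noteq> m" using Z_m[OF bZ] assms by auto
    then have "i < m" using assms by simp
    then show ?thesis using Zdown[OF bZ] assms Z_subA[OF low] by blast
  qed
qed

lemma closed:
  "b \<in> A d \<Longrightarrow> a \<in> mons (Suc m) \<Longrightarrow> mdvd a b \<Longrightarrow> a \<in> A (mdeg (Suc m) a)"
proof (induction d arbitrary: b)
  case 0
  have bd: "b \<in> mons (Suc m)" "mdeg (Suc m) b = 0" using 0(1) A_sub[of 0] by blast+
  then have b0: "\<And>i. b i = 0" using mdeg0 by blast
  then have "a = b" using 0 by (auto simp: mdvd_def fun_eq_iff)
  then show ?case using 0(1) bd by simp
next
  case (Suc d)
  show ?case
  proof (cases "a = b")
    case True
    have "mdeg (Suc m) b = Suc d" using Suc.prems(1) A_sub[of "Suc d"] by blast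
    then show ?thesis using True Suc.prems(1) by simp
  next
    case False
    then obtain i where i: "a i < b i" using Suc.prems(3) unfolding mdvd_def
      by (metis antisym fun_eq_iff not_le)
    have bm: "b \<in> mons (Suc m)" using Suc.prems(1) A_sub[of "Suc d"] by blast
    have "i < Suc m"
    proof (rule ccontr)
      assume "\<not> i < Suc m" then show False using i bm mons_zero[of b "Suc m" i] by simp
    qed
    then have "b(i := b i - 1) \<in> A d" using step Suc.prems i by simp
    moreover have "mdvd a (b(i := b i - 1))" using Suc.prems(3) i by (auto simp: mdvd_def)
    ultimately show ?thesis using Suc.IH Suc.prems by blast
  qed
qed

definition I where "I = {a \<in> mons (Suc m). a \<notin> A (mdeg (Suc m) a)}"

lemma I_mi: "monomial_ideal (Suc m) I"
  unfolding monomial_ideal_def I_def using closed by blast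

lemma I_hilb: "hilb (Suc m) I d = h d"
proof -
  have "{a \<in> mons (Suc m). mdeg (Suc m) a = d \<and> a \<notin> I} = A d"
    using A_sub[of d] by (auto simp: I_def)
  then show ?thesis using cardA by (simp add: hilb_def)
qed

lemma nsh: "b m = 0 \<Longrightarrow> b \<notin> sh ` X"
  by (auto simp: sh_def)

lemma A_m0: assumes "b \<in> A e" "b m = 0" shows "b \<in> Z e"
proof (cases e)
  case 0 then show ?thesis using assms by simp
next
  case (Suc e')
  have nb: "b \<notin> sh ` A e'" using nsh assms(2) by blast
  show ?thesis
  proof (cases "enat (Suc e') < r")
    case True then show ?thesis using assms(1) Suc nb by simp
  next
    case False
    then have "b \<in> sh ` A e'" using assms(1) Suc bot_sub[of "Suc m" "h (Suc e')" "sh ` A e'"] by auto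
    then show ?thesis using nb by blast
  qed
qed

lemma mingen_pred:
  assumes "N \<in> min_gens I" "j < Suc m" "N j > 0"
  shows "N(j := N j - 1) \<in> A (mdeg (Suc m) N - 1)"
proof -
  let ?N = "N(j := N j - 1)"
  have NI: "N \<in> I" using assms by (simp add: min_gens_def)
  then have Nm: "N \<in> mons (Suc m)" by (simp add: I_def)
  have m1: "?N \<in> mons (Suc m)" using Nm assms mons_upd by blast
  have "mdvd ?N N" by (simp add: mdvd_def)
  moreover have "?N \<noteq> N" using assms by (metis fun_upd_same diff_less less_numeral_extra(1) less_irrefl)
  ultimately have "?N \<notin> I" using assms by (auto simp: min_gens_def)
  then have "?N \<in> A (mdeg (Suc m) ?N)" using m1 by (simp add: I_def)
  moreover have "mdeg (Suc m) ?N + N j = mdeg (Suc m) N + (N j - 1)" using mdeg_upd_lt assms(2) by blast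
  moreover have "mdeg (Suc m) ?N = mdeg (Suc m) N - 1" using calculation(2) assms(3) by linarith
  ultimately show ?thesis by simp
qed

lemma I_ar: "almost_revlex (Suc m) I"
  unfolding almost_revlex_def
proof (intro conjI I_mi ballI impI)
  fix M N assume M: "M \<in> mons (Suc m)" and N: "N \<in> min_gens I"
    and c: "mdeg (Suc m) M = mdeg (Suc m) N \<and> revlex_gt (Suc m) M N"
  define d where "d = mdeg (Suc m) N"
  have NI: "N \<in> I" using N by (simp add: min_gens_def)
  then have Nm: "N \<in> mons (Suc m)" and NA: "N \<notin> A d" by (auto simp: I_def d_def)
  show "M \<in> I"
  proof (rule ccontr)
    assume "M \<notin> I"
    then have MA: "M \<in> A d" using M c by (simp add: I_def d_def)
    show False
    proof (cases "d = 0 \<or> enat d < r")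
      case low: True
      have Nm0: "N m = 0"
      proof (rule ccontr)
        assume "N m \<noteq> 0"
        then have p: "N(m := N m - 1) \<in> A (d - 1)" using mingen_pred[OF N, of m] by (simp add: d_def)
        have "d \<noteq> 0" using \<open>N m \<noteq> 0\<close> le_mdeg[of m "Suc m" N] by (simp add: d_def)
        then obtain d' where d': "d = Suc d'" by (cases d) auto
        have "N = sh (N(m := N m - 1))" using \<open>N m \<noteq> 0\<close> by (auto simp: sh_def fun_eq_iff)
        then have "N \<in> sh ` A d'" using p d' by (metis diff_Suc_1 image_eqI)
        then have "N \<in> A d" using d' low by auto
        then show False using NA by simp
      qed
      have NmJ: "N \<in> mons m" using Nm Nm0 mons_down by blast
      have ddN: "mdeg m N = d" using NmJ by (simp add: mdeg_mons_Suc d_def)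
      have "N \<notin> Z d" using NA Z_subA[OF low] by blast
      then have NJ: "N \<in> J" using NmJ ddN by (simp add: Z_def)
      have Ngen: "N \<in> min_gens J"
        unfolding min_gens_def
      proof (intro CollectI conjI NJ ballI impI)
        fix b assume b: "b \<in> J" "mdvd b N"
        have "J \<subseteq> mons m" using J by (simp add: almost_revlex_def monomial_ideal_def)
        then have bm: "b \<in> mons m" using b by blast
        have "b \<notin> A (mdeg (Suc m) b)"
        proof
          assume "b \<in> A (mdeg (Suc m) b)"
          moreover have "b m = 0" using bm mons_zero[of b m m] by simp
          ultimately have "b \<in> Z (mdeg (Suc m) b)" using A_m0 by blast
          then show False using b by (simp add: Z_def)
        qed
        then have "b \<in> I" using bm mons_Suc by (simp add: I_def)
        then show "b = N" using N b by (simp add: min_gens_def)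
      qed
      have Mm0: "M m = 0" using rl_zero c Nm0 by blast
      have MmJ: "M \<in> mons m" using M Mm0 mons_down by blast
      have "revlex_gt m M N" using rl_down c Nm0 Mm0 by blast
      moreover have "mdeg m M = mdeg m N" using c MmJ NmJ by (simp add: mdeg_mons_Suc)
      ultimately have "M \<in> J" using J MmJ Ngen unfolding almost_revlex_def by blast
      moreover have "M \<in> Z d" using MA A_m0 Mm0 by blast
      ultimately show False by (simp add: Z_def)
    next
      case high: False
      then obtain d' where d': "d = Suc d'" "\<not> enat (Suc d') < r" by (cases d) auto
      then have AS: "A d = botk (Suc m) (h d) (sh ` A d')" by simp
      have "M m \<noteq> 0" using MA AS bot_sub sh_m by fastforce
      have "N m \<noteq> 0"
      proof
        assume "N m = 0"
        then have "M m = 0" using rl_zero[of m M N] c by blast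
        then show False using \<open>M m \<noteq> 0\<close> by simp
      qed
      then have p: "N(m := N m - 1) \<in> A d'" using mingen_pred[OF N, of m] d' by (simp add: d_def)
      have "N = sh (N(m := N m - 1))" using \<open>N m \<noteq> 0\<close> by (auto simp: sh_def fun_eq_iff)
      then have NS: "N \<in> sh ` A d'" using p by blast
      have fS: "finite (sh ` A d')" using finA by simp
      have MB: "M \<in> botk (Suc m) (h d) (sh ` A d')" using MA AS by simp
      have rl: "revlex_gt (Suc m) M N" using c by blast
      have "N \<in> botk (Suc m) (h d) (sh ` A d')" using bot_down[OF fS MB NS rl] .
      then have "N \<in> A d" using AS by simp
      then show False using NA by simp
    qed
  qed
qed

end


lemma build:
  assumes "almost_revlex m J" "\<And>d. hilb m J d = g d" "h 0 = g 0"
    "\<And>d. enat (Suc d) < r \<Longrightarrow> h (Suc d) = h d + g (Suc d)"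
    "\<And>d. \<not> enat (Suc d) < r \<Longrightarrow> h (Suc d) \<le> h d"
  shows "\<exists>I. almost_revlex (Suc m) I \<and> (\<forall>d. hilb (Suc m) I d = h d)"
proof -
  interpret stp m J g h r using assms by unfold_locales auto
  show ?thesis using I_ar I_hilb by blast
qed

lemma hseq_shift: "hseq (hseq h 1) i d = hseq h (Suc i) d"
  by (induction i arbitrary: d) auto

lemma rr_shift: "rr (hseq h 1) i = rr h (Suc i)"
  by (simp only: rr_def hseq_shift)

lemma hseq_0: "h 0 = 1 \<Longrightarrow> hseq h i 0 = 1"
  by (cases i) auto

lemma hseq_1: "h 0 = 1 \<Longrightarrow> hseq h i 1 = h 1 - i"
proof (induction i)
  case 0 then show ?case by simp
next
  case (Suc i) then show ?case using hseq_0[of h i] by simp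
qed

lemma rr_fin: assumes "h 0 = 1" "h 1 \<le> Suc i" shows "rr h i < \<infinity>"
proof -
  have "hseq h i 1 \<le> hseq h i (1 - 1)" using assms hseq_1[of h i] hseq_0[of h i] by simp
  then have "\<exists>d\<ge>1. hseq h i d \<le> hseq h i (d - 1)" by blast
  then show ?thesis by (simp add: rr_def)
qed

lemma DD0: assumes "rr h 0 < \<infinity>" shows "DD h = 0"
  unfolding DD_def by (rule Least_equality) (use assms in auto)

lemma rr0_fin:
  assumes uat: "unimodal_at_tails h" and q: "rr h 0 = enat q"
  shows "q \<ge> 1" "\<And>d. 1 \<le> d \<Longrightarrow> d < q \<Longrightarrow> h (d-1) < h d" "\<And>d. q \<le> d \<Longrightarrow> h d \<le> h (d-1)"
proof -
  have ex: "\<exists>d\<ge>1. hseq h 0 d \<le> hseq h 0 (d - 1)" using q by (auto simp: rr_def split: if_splits)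
  then have qd: "q = (LEAST d. d \<ge> 1 \<and> h d \<le> h (d - 1))" using q by (auto simp: rr_def)
  have P: "q \<ge> 1 \<and> h q \<le> h (q - 1)" unfolding qd by (rule LeastI_ex) (use ex in simp)
  then show "q \<ge> 1" by simp
  show "h (d-1) < h d" if "1 \<le> d" "d < q" for d
    using not_less_Least[of d "\<lambda>d. d \<ge> 1 \<and> h d \<le> h (d - 1)"] that qd by auto
  have "DD h = 0" using q DD0 by simp
  moreover have "DD h \<le> 0 \<and> 0 < max 1 (h 1) \<longrightarrow> (\<forall>d. enat d \<ge> rr h 0 \<longrightarrow> hseq h 0 d \<le> hseq h 0 (d - 1))"
    using uat unfolding unimodal_at_tails_def by blast
  ultimately have "\<forall>d. enat d \<ge> rr h 0 \<longrightarrow> hseq h 0 d \<le> hseq h 0 (d - 1)" by simp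
  then show "h d \<le> h (d-1)" if "q \<le> d" for d using that q by simp
qed

lemma rr0_inf:
  assumes "rr h 0 = \<infinity>" "1 \<le> d" shows "h (d-1) < h d"
  using assms by (auto simp: rr_def split: if_splits)

lemma props:
  assumes uat: "unimodal_at_tails h"
  shows "\<And>d. enat (Suc d) < rr h 0 \<Longrightarrow> h d < h (Suc d)"
    "\<And>d. \<not> enat (Suc d) < rr h 0 \<Longrightarrow> h (Suc d) \<le> h d"
proof -
  fix d
  show "h d < h (Suc d)" if "enat (Suc d) < rr h 0"
  proof (cases "rr h 0")
    case (enat q) then show ?thesis using rr0_fin(2)[OF uat enat, of "Suc d"] that by simp
  next
    case infinity then show ?thesis using rr0_inf[of h "Suc d"] by simp
  qed
  show "h (Suc d) \<le> h d" if "\<not> enat (Suc d) < rr h 0"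
  proof (cases "rr h 0")
    case (enat q) then show ?thesis using rr0_fin(3)[OF uat enat, of "Suc d"] that by simp
  next
    case infinity then show ?thesis using that by simp
  qed
qed

lemma low_case:
  assumes h0: "h 0 = 1" and h1: "h 1 \<le> 1" and uat: "unimodal_at_tails h"
  shows "\<exists>I. almost_revlex 1 I \<and> (\<forall>d. hilb 1 I d = h d)"
proof -
  define g :: "nat \<Rightarrow> nat" where "g d = (if d = 0 then 1 else 0)" for d
  have m0: "mons 0 = {\<lambda>_. 0}" by (auto simp: mons_def)
  have ar: "almost_revlex 0 {}"
    by (simp add: almost_revlex_def monomial_ideal_def min_gens_def)
  have hj: "hilb 0 {} d = g d" for d
    by (simp add: hilb_def m0 mdeg_def g_def)
  have rfin: "rr h 0 < \<infinity>" using rr_fin[of h 0] h0 h1 by simp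
  have rle: "\<not> enat (Suc d) < rr h 0" for d
  proof
    assume a: "enat (Suc d) < rr h 0"
    then obtain q where q: "rr h 0 = enat q" using rfin by (cases "rr h 0") auto
    have "1 < q" using a q by simp
    then have "h 0 < h 1" using rr0_fin(2)[OF uat q, of 1] by simp
    then show False using h0 h1 by simp
  qed
  have "\<exists>I. almost_revlex (Suc 0) I \<and> (\<forall>d. hilb (Suc 0) I d = h d)"
    by (rule build[of 0 "{}" g h "rr h 0"]) (use ar hj h0 rle props[OF uat] in \<open>auto simp: g_def\<close>)
  then show ?thesis by simp
qed

lemma main: "\<forall>h. h 0 = 1 \<longrightarrow> h 1 = Suc n \<longrightarrow> unimodal_at_tails h \<longrightarrow>
  (\<exists>I. almost_revlex (Suc n) I \<and> (\<forall>d. hilb (Suc n) I d = h d))"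
proof (induction n)
  case 0 then show ?case using low_case by simp
next
  case (Suc n)
  show ?case
  proof (intro allI impI)
    fix h :: "nat \<Rightarrow> nat"
    assume h0: "h 0 = 1" and h1: "h 1 = Suc (Suc n)" and uat: "unimodal_at_tails h"
    define g where "g = hseq h 1"
    have g0: "g 0 = 1" by (simp add: g_def)
    have g1: "g 1 = Suc n" using hseq_1[of h 1] h0 h1 by (simp add: g_def)
    have uatg: "unimodal_at_tails g"
      unfolding unimodal_at_tails_def
    proof (intro allI impI)
      fix i d assume i: "DD g \<le> i \<and> i < max 1 (g 1)" and d: "rr g i \<le> enat d"
      have ex: "n < max 1 (g 1) \<and> rr g n < \<infinity>"
        using g1 rr_shift[of h n] rr_fin[of h "Suc n"] h0 h1 by (simp add: g_def)
      have PD: "DD g < max 1 (g 1) \<and> rr g (DD g) < \<infinity>"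
        unfolding DD_def by (rule LeastI[of _ n]) (rule ex)
      have "Suc (DD g) < max 1 (h 1) \<and> rr h (Suc (DD g)) < \<infinity>"
        using PD g1 h1 rr_shift[of h "DD g"] by (simp add: g_def)
      then have "DD h \<le> Suc (DD g)" unfolding DD_def by (rule Least_le)
      then have "DD h \<le> Suc i \<and> Suc i < max 1 (h 1)" using i g1 h1 by simp
      then have "\<forall>d. enat d \<ge> rr h (Suc i) \<longrightarrow> hseq h (Suc i) d \<le> hseq h (Suc i) (d - 1)"
        using uat unfolding unimodal_at_tails_def by blast
      then show "hseq g i d \<le> hseq g i (d - 1)"
        using d rr_shift[of h i] hseq_shift[of h i] by (simp add: g_def)
    qed
    obtain J where J: "almost_revlex (Suc n) J" "\<forall>d. hilb (Suc n) J d = g d"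
      using Suc.IH g0 g1 uatg by blast
    have inc: "h (Suc d) = h d + g (Suc d)" if "enat (Suc d) < rr h 0" for d
      using props(1)[OF uat that] by (simp add: g_def)
    show "\<exists>I. almost_revlex (Suc (Suc n)) I \<and> (\<forall>d. hilb (Suc (Suc n)) I d = h d)"
      by (rule build[of "Suc n" J g h "rr h 0"]) (use J h0 g0 inc props(2)[OF uat] in auto)
  qed
qed

theorem theorem3p9:
  fixes h :: "nat \<Rightarrow> nat"
  assumes "h 0 = 1"
    and "unimodal_at_tails h"
  shows "\<exists>I. almost_revlex (if h 1 \<ge> 1 then h 1 else 1) I \<and>
             (\<forall>d. hilb (if h 1 \<ge> 1 then h 1 else 1) I d = h d)"
proof (cases "h 1")
  case 0 then show ?thesis using low_case[of h] assms by simp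
next
  case (Suc n) then show ?thesis using main[of n] assms by simp
qed


end
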